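(* Let $G\ne\{0\}$ be a locally balanced Hausdorff topological vector group over $\mathbb R$ and $d$ a metric on $G$ which is continuous as a map $G\times G\to\mathbb R$. If $G$ is not NSS, then there exists a sequence $(g_n)_{n\in\mathbb N}$ in $G$ such that $$0<\sup_{t\in\mathbb R}d(0,tg_1)<1,\qquad \sup_{t\in\mathbb R}d(0,tg_{n+1})<\tfrac14\sup_{t\in\mathbb R}d(0,tg_n)\quad(n=1,2,\dots).$$
   Context: A topological vector group over $\mathbb R$ is a topological abelian group $(G,+)$ which is also a real vector space (same addition) such that $x\mapsto tx$ is continuous for each $t\in\mathbb R$. A subset $A$ is balanced if $tA\subset A$ for all $|t|\le 1$. $G$ is locally balanced if the balanced neighborhoods of $0$ form a neighborhood base of $0$. $G$ is NSS if some neighborhood of $0$ contains no nontrivial subgroup. *)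

theory Defs
  imports "HOL-Analysis.Analysis"
begin

definition nhd0 :: "'a::{topological_space,zero} set \<Rightarrow> bool" where
  "nhd0 U \<longleftrightarrow> (\<exists>V. open V \<and> 0 \<in> V \<and> V \<subseteq> U)"

definition balanced_set :: "'a::real_vector set \<Rightarrow> bool" where
  "balanced_set A \<longleftrightarrow> (\<forall>t::real. \<bar>t\<bar> \<le> 1 \<longrightarrow> (\<lambda>x. t *\<^sub>R x) ` A \<subseteq> A)"

definition locally_balanced :: "'a::{real_vector,topological_space} itself \<Rightarrow> bool" where
  "locally_balanced _ \<longleftrightarrow>
     (\<forall>U::'a set. nhd0 U \<longrightarrow> (\<exists>V. nhd0 V \<and> balanced_set V \<and> V \<subseteq> U))"

definition add_subgroup :: "'a::ab_group_add set \<Rightarrow> bool" where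
  "add_subgroup H \<longleftrightarrow> 0 \<in> H \<and> (\<forall>x\<in>H. \<forall>y\<in>H. x + y \<in> H \<and> - x \<in> H)"

definition NSS :: "'a::{ab_group_add,topological_space} itself \<Rightarrow> bool" where
  "NSS _ \<longleftrightarrow> (\<exists>U::'a set. nhd0 U \<and> (\<forall>H. add_subgroup H \<and> H \<subseteq> U \<longrightarrow> H = {0}))"

definition is_metric :: "('a \<Rightarrow> 'a \<Rightarrow> real) \<Rightarrow> bool" where
  "is_metric d \<longleftrightarrow> (\<forall>x y. d x y = 0 \<longleftrightarrow> x = y) \<and> (\<forall>x y. d x y = d y x) \<and>
     (\<forall>x y z. d x z \<le> d x y + d y z)"

end

theory Submission
  imports Defs
begin

theorem lemma7p6:
  fixes d :: "'a::{real_vector, topological_ab_group_add, t2_space} \<Rightarrow> 'a \<Rightarrow> real"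
  assumes scal_cont: "\<And>t::real. continuous_on UNIV (\<lambda>x::'a. t *\<^sub>R x)"
    and nontriv: "\<exists>x::'a. x \<noteq> 0"
    and lb: "locally_balanced TYPE('a)"
    and metric: "is_metric d"
    and d_cont: "continuous_on UNIV (\<lambda>p::'a \<times> 'a. d (fst p) (snd p))"
    and notNSS: "\<not> NSS TYPE('a)"
  shows "\<exists>g :: nat \<Rightarrow> 'a.
           (\<forall>n. bdd_above (range (\<lambda>t::real. d 0 (t *\<^sub>R g n)))) \<and>
           0 < (SUP t::real. d 0 (t *\<^sub>R g 0)) \<and> (SUP t::real. d 0 (t *\<^sub>R g 0)) < 1 \<and>
           (\<forall>n. (SUP t::real. d 0 (t *\<^sub>R g (Suc n))) < (1/4) * (SUP t::real. d 0 (t *\<^sub>R g n)))"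
proof -
  define P where "P = (\<lambda>(e::real) (h::'a). h \<noteq> 0 \<and> (\<forall>t::real. d 0 (t *\<^sub>R h) < e))"
  define S where "S = (\<lambda>h::'a. SUP t::real. d 0 (t *\<^sub>R h))"
  have c0: "continuous_on UNIV (\<lambda>x::'a. d 0 x)"
  proof -
    have "continuous_on UNIV (\<lambda>x::'a. (0::'a, x))"
      by (intro continuous_intros)
    from continuous_on_compose[OF this continuous_on_subset[OF d_cont]]
    show ?thesis by (simp add: o_def)
  qed
  have key: "\<exists>h. P e h" if e: "e > 0" for e
  proof -
    let ?U = "{x::'a. d 0 x < e}"
    have "open ((\<lambda>x. d 0 x) -` {..<e} \<inter> UNIV)"
      using c0 open_lessThan[of e] unfolding continuous_on_open_vimage[OF open_UNIV] by blast
    moreover have "(\<lambda>x. d 0 x) -` {..<e} \<inter> UNIV = ?U" by auto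
    ultimately have "open ?U" by simp
    moreover have "0 \<in> ?U"
    proof -
      have "d 0 0 = 0" using metric unfolding is_metric_def by simp
      then show ?thesis using e by simp
    qed
    ultimately have "nhd0 ?U" unfolding nhd0_def by blast
    then obtain V where V: "nhd0 V" "balanced_set V" "V \<subseteq> ?U"
      using lb unfolding locally_balanced_def by blast
    then obtain H where H: "add_subgroup H" "H \<subseteq> V" "H \<noteq> {0}"
      using notNSS unfolding NSS_def by blast
    moreover have "0 \<in> H" using H(1) unfolding add_subgroup_def by simp
    ultimately obtain h where h: "h \<in> H" "h \<noteq> 0" by blast
    have mult: "real n *\<^sub>R h \<in> H" for n
    proof (induction n)
      case 0 then show ?case using H unfolding add_subgroup_def by simp
    next
      case (Suc n)
      have "real (Suc n) *\<^sub>R h = real n *\<^sub>R h + h" by (simp add: scaleR_left_distrib)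
      then show ?case using Suc h H unfolding add_subgroup_def by simp
    qed
    have "t *\<^sub>R h \<in> V" for t::real
    proof -
      obtain n::nat where n: "\<bar>t\<bar> + 1 \<le> real n" using real_arch_simple by blast
      then have np: "real n > 0" by linarith
      have "\<bar>t / real n\<bar> \<le> 1" using n np by (simp only: abs_divide abs_of_pos divide_le_eq_1_pos)
      moreover have "real n *\<^sub>R h \<in> V" using mult H by blast
      ultimately have "(t / real n) *\<^sub>R (real n *\<^sub>R h) \<in> V"
        using V(2) unfolding balanced_set_def by (meson image_subset_iff)
      then show ?thesis using np by simp
    qed
    then show ?thesis using h V(3) unfolding P_def by blast
  qed
  have dpos: "d 0 x > 0" if "x \<noteq> 0" for x
  proof -
    have m: "\<forall>x y. (d x y = 0) = (x = y)" "\<forall>x y. d x y = d y x" "\<forall>x y z. d x z \<le> d x y + d y z"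
      using metric unfolding is_metric_def by auto
    have "d 0 0 \<le> d 0 x + d x 0" using m(3) by blast
    moreover have "d x 0 = d 0 x" using m(2) by blast
    moreover have "d 0 0 = 0" using m(1) by blast
    moreover have "d 0 x \<noteq> 0" using m(1) that by auto
    ultimately show ?thesis by linarith
  qed
  have props: "bdd_above (range (\<lambda>t::real. d 0 (t *\<^sub>R h))) \<and> 0 < S h \<and> S h \<le> e"
    if "P e h" for e h
  proof -
    have b: "bdd_above (range (\<lambda>t::real. d 0 (t *\<^sub>R h)))"
      using that unfolding P_def by (intro bdd_aboveI[of _ e]) (auto intro: less_imp_le)
    have "d 0 (1 *\<^sub>R h) \<le> S h" unfolding S_def by (rule cSUP_upper[OF _ b]) simp
    moreover have "d 0 h > 0" using dpos that unfolding P_def by blast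
    moreover have "S h \<le> e" unfolding S_def
      using that unfolding P_def by (intro cSUP_least) (auto intro: less_imp_le)
    ultimately show ?thesis using b by simp
  qed
  define g where "g = rec_nat (SOME h. P (1/2) h) (\<lambda>n x. SOME h. P (S x / 8) h)"
  have g0: "g 0 = (SOME h. P (1/2) h)" and gS: "g (Suc n) = (SOME h. P (S (g n) / 8) h)" for n
    unfolding g_def by simp_all
  have P0: "P (1/2) (g 0)" unfolding g0 by (rule someI_ex) (rule key, simp)
  have all: "\<exists>e. P e (g n)" for n
  proof (induction n)
    case 0 then show ?case using P0 by blast
  next
    case (Suc n)
    then obtain e where "P e (g n)" by blast
    then have "S (g n) > 0" using props by blast
    then have "S (g n) / 8 > 0" by simp
    then have "P (S (g n) / 8) (g (Suc n))" unfolding gS by (rule someI_ex[OF key])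
    then show ?case by blast
  qed
  have PS: "P (S (g n) / 8) (g (Suc n))" for n
  proof -
    obtain e where "P e (g n)" using all by blast
    then have "S (g n) > 0" using props by blast
    then have "S (g n) / 8 > 0" by simp
    then show ?thesis unfolding gS by (rule someI_ex[OF key])
  qed
  have B: "bdd_above (range (\<lambda>t::real. d 0 (t *\<^sub>R g n)))" for n
  proof -
    obtain e where "P e (g n)" using all by blast
    from props[OF this] show ?thesis by (rule conjunct1)
  qed
  have R: "S (g (Suc n)) < (1/4) * S (g n)" for n
  proof -
    obtain e where "P e (g n)" using all by blast
    then have "0 < S (g n)" using props by blast
    moreover have "S (g (Suc n)) \<le> S (g n) / 8" using props[OF PS] by simp
    ultimately show ?thesis by simp
  qed
  have Z: "0 < S (g 0)" "S (g 0) < 1" using props[OF P0] by simp_all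
  show ?thesis using B R Z unfolding S_def by blast
qed

end
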